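(* Let $G=(V,E)$ be a connected geodetic graph, let $r\in V$, and let $T$ be the shortest-path tree of $G$ rooted at $r$. Suppose $u\neq v$ are vertices on the same level of $T$ with $\{u,v\}\in E$. Then for no vertex $u'$ in the subtree of $T$ rooted at $u$ and no vertex $v'$ in the subtree of $T$ rooted at $v$ with $\{u',v'\}\neq\{u,v\}$ is $\{u',v'\}$ an edge of $G$.
   Context: All graphs are finite, simple and undirected. A geodesic from $u$ to $v$ is a shortest path; $G$ is geodetic if for all $u,v\in V$ there is at most one geodesic from $u$ to $v$. For a connected geodetic graph $G$ and $r\in V$, the shortest-path tree rooted at $r$ is the graph $(V,T)$ where $T\subseteq E$ is the set of all edges lying on some shortest path from $r$ to another vertex; it is a tree. The level of a vertex $w$ is its distance $d(r,w)$ from $r$. Subtrees are taken in the rooted tree $(V,T)$. *)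

theory Defs
  imports Main
begin

definition simple_graph :: "'a set \<Rightarrow> ('a \<Rightarrow> 'a \<Rightarrow> bool) \<Rightarrow> bool" where
  "simple_graph V E \<longleftrightarrow> finite V \<and> (\<forall>x y. E x y \<longrightarrow> x \<in> V \<and> y \<in> V)
     \<and> (\<forall>x y. E x y \<longrightarrow> E y x) \<and> (\<forall>x. \<not> E x x)"

definition is_path :: "'a set \<Rightarrow> ('a \<Rightarrow> 'a \<Rightarrow> bool) \<Rightarrow> 'a list \<Rightarrow> bool" where
  "is_path V E p \<longleftrightarrow> p \<noteq> [] \<and> set p \<subseteq> V \<and> distinct p
     \<and> (\<forall>i. Suc i < length p \<longrightarrow> E (p ! i) (p ! Suc i))"

definition path_from_to :: "'a set \<Rightarrow> ('a \<Rightarrow> 'a \<Rightarrow> bool) \<Rightarrow> 'a \<Rightarrow> 'a \<Rightarrow> 'a list \<Rightarrow> bool" where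
  "path_from_to V E u v p \<longleftrightarrow> is_path V E p \<and> hd p = u \<and> last p = v"

definition connected_graph :: "'a set \<Rightarrow> ('a \<Rightarrow> 'a \<Rightarrow> bool) \<Rightarrow> bool" where
  "connected_graph V E \<longleftrightarrow> (\<forall>u\<in>V. \<forall>v\<in>V. \<exists>p. path_from_to V E u v p)"

definition dist :: "'a set \<Rightarrow> ('a \<Rightarrow> 'a \<Rightarrow> bool) \<Rightarrow> 'a \<Rightarrow> 'a \<Rightarrow> nat" where
  "dist V E u v = (LEAST n. \<exists>p. path_from_to V E u v p \<and> length p = Suc n)"

definition geodesic :: "'a set \<Rightarrow> ('a \<Rightarrow> 'a \<Rightarrow> bool) \<Rightarrow> 'a \<Rightarrow> 'a \<Rightarrow> 'a list \<Rightarrow> bool" where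
  "geodesic V E u v p \<longleftrightarrow> path_from_to V E u v p \<and> length p = Suc (dist V E u v)"

definition geodetic :: "'a set \<Rightarrow> ('a \<Rightarrow> 'a \<Rightarrow> bool) \<Rightarrow> bool" where
  "geodetic V E \<longleftrightarrow> (\<forall>u\<in>V. \<forall>v\<in>V. \<forall>p q. geodesic V E u v p \<and> geodesic V E u v q \<longrightarrow> p = q)"

definition spt_edge :: "'a set \<Rightarrow> ('a \<Rightarrow> 'a \<Rightarrow> bool) \<Rightarrow> 'a \<Rightarrow> 'a \<Rightarrow> 'a \<Rightarrow> bool" where
  "spt_edge V E r x y \<longleftrightarrow> E x y \<and> (\<exists>w p i. w \<in> V \<and> w \<noteq> r \<and> geodesic V E r w p \<and> Suc i < length p
      \<and> ({p ! i, p ! Suc i} = {x, y}))"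

definition spt_subtree :: "'a set \<Rightarrow> ('a \<Rightarrow> 'a \<Rightarrow> bool) \<Rightarrow> 'a \<Rightarrow> 'a \<Rightarrow> 'a set" where
  "spt_subtree V E r u = {w \<in> V. \<exists>p. path_from_to V (spt_edge V E r) r w p \<and> u \<in> set p}"

end

theory Submission
  imports Defs
begin

definition walk :: "'a set \<Rightarrow> ('a \<Rightarrow> 'a \<Rightarrow> bool) \<Rightarrow> 'a \<Rightarrow> 'a \<Rightarrow> 'a list \<Rightarrow> bool" where
  "walk V E x y p \<longleftrightarrow> p \<noteq> [] \<and> set p \<subseteq> V \<and> successively E p \<and> hd p = x \<and> last p = y"

lemma path_walk: "path_from_to V E x y p \<longleftrightarrow> walk V E x y p \<and> distinct p"
  unfolding path_from_to_def is_path_def walk_def successively_conv_nth by blast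

lemma walk_shorten:
  assumes "walk V E x y p" "\<not> distinct p"
  shows "\<exists>q. walk V E x y q \<and> length q < length p"
proof -
  obtain xs ys zs z where p0: "p = xs @ [z] @ ys @ [z] @ zs"
    using not_distinct_decomp[OF assms(2)] by blast
  have p: "p = xs @ ((z # ys) @ (z # zs))" using p0 by simp
  have sp: "successively E p" "set p \<subseteq> V" "hd p = x" "last p = y"
    using assms(1) unfolding walk_def by auto
  have A: "successively E xs" "successively E ((z # ys) @ (z # zs))"
    "xs \<noteq> [] \<Longrightarrow> E (last xs) z"
    using sp(1) unfolding p successively_append_iff by auto
  have B: "successively E (z # zs)" using A(2) unfolding successively_append_iff by auto
  have "successively E (xs @ (z # zs))"
    unfolding successively_append_iff using A(1) A(3) B by auto
  moreover have "set (xs @ (z # zs)) \<subseteq> V" using sp(2) p by auto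
  moreover have "hd (xs @ (z # zs)) = x" using sp(3) p by (cases xs) auto
  moreover have "last (xs @ (z # zs)) = y" using sp(4) p by simp
  ultimately have "walk V E x y (xs @ (z # zs))" unfolding walk_def by simp
  then show ?thesis using p by auto
qed

lemma walk_to_path:
  "walk V E x y p \<Longrightarrow> \<exists>q. path_from_to V E x y q \<and> length q \<le> length p"
proof (induction "length p" arbitrary: p rule: less_induct)
  case less
  show ?case
  proof (cases "distinct p")
    case True
    have "path_from_to V E x y p" using path_walk[THEN iffD2, OF conjI[OF less.prems True]] .
    then show ?thesis by blast
  next
    case False
    obtain q where q: "walk V E x y q" "length q < length p"
      using walk_shorten[OF less.prems False] by blast
    obtain q' where "path_from_to V E x y q'" "length q' \<le> length q"
      using less.hyps[OF q(2) q(1)] by blast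
    then show ?thesis using q(2) by (intro exI[of _ q']) simp
  qed
qed

lemma dist_le_path: "path_from_to V E x y q \<Longrightarrow> Suc (dist V E x y) \<le> length q"
proof -
  assume a: "path_from_to V E x y q"
  then have ne: "q \<noteq> []" by (simp add: path_from_to_def is_path_def)
  have "dist V E x y \<le> length q - 1"
    unfolding dist_def apply (rule Least_le) using a ne by (intro exI[of _ q]) auto
  then show ?thesis using ne by (cases q) auto
qed

lemma dist_le: "walk V E x y p \<Longrightarrow> Suc (dist V E x y) \<le> length p"
  using walk_to_path dist_le_path by (meson le_trans)

lemma geo_exists:
  assumes "connected_graph V E" "x \<in> V" "y \<in> V"
  shows "\<exists>p. geodesic V E x y p"
proof -
  obtain p where p: "path_from_to V E x y p" using assms unfolding connected_graph_def by blast
  then have ne: "p \<noteq> []" by (simp add: path_from_to_def is_path_def)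
  have "\<exists>n p. path_from_to V E x y p \<and> length p = Suc n"
    using p ne by (intro exI[of _ "length p - 1"] exI[of _ p]) auto
  from LeastI_ex[OF this] show ?thesis unfolding geodesic_def dist_def by blast
qed

lemma walk_geodesic:
  assumes "walk V E x y p" "length p = Suc (dist V E x y)"
  shows "geodesic V E x y p"
proof -
  have "distinct p"
  proof (rule ccontr)
    assume "\<not> distinct p"
    then obtain q where "walk V E x y q" "length q < length p" using walk_shorten[OF assms(1)] by blast
    then show False using dist_le[of V E x y q] assms(2) by simp
  qed
  then have "path_from_to V E x y p" using path_walk[THEN iffD2, OF conjI[OF assms(1)]] by blast
  then show ?thesis unfolding geodesic_def using assms(2) by simp
qed

lemma geodesic_walk: "geodesic V E x y p \<Longrightarrow> walk V E x y p"
  unfolding geodesic_def path_walk by blast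

lemma walk_concat:
  assumes "walk V E x y p" "walk V E y z q"
  shows "walk V E x z (p @ tl q)"
proof (cases q)
  case Nil then show ?thesis using assms by (simp add: walk_def)
next
  case (Cons a q')
  have a: "a = y" "last p = y" "p \<noteq> []" "hd p = x" "set p \<subseteq> V" "successively E p"
    using assms Cons unfolding walk_def by auto
  have b: "successively E (a # q')" "set q' \<subseteq> V" "last (a # q') = z"
    using assms(2) Cons unfolding walk_def by auto
  have s1: "successively E q'" and s2: "q' \<noteq> [] \<Longrightarrow> E a (hd q')"
    using b(1) by (auto simp: successively_Cons)
  have "successively E (p @ q')"
    unfolding successively_append_iff using a s1 s2 by auto
  moreover have "last (p @ q') = z" using b(3) a by (cases "q' = []") auto
  ultimately show ?thesis using a b Cons unfolding walk_def by simp
qed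

lemma walk_len_concat: "walk V E y z q \<Longrightarrow> length (p @ tl q) = length p + length q - 1"
  by (cases q) (auto simp: walk_def)

lemma walk_take:
  assumes "walk V E x y p" "i < length p"
  shows "walk V E x (p ! i) (take (Suc i) p)"
proof -
  have "last (take (Suc i) p) = p ! i" using assms(2)
    by (simp add: take_Suc_conv_app_nth)
  moreover have "hd (take (Suc i) p) = hd p" using assms(2) by (cases p) auto
  moreover have "set (take (Suc i) p) \<subseteq> set p" by (rule set_take_subset)
  moreover have "successively E (take (Suc i) p)" using assms(1) unfolding walk_def
    by (auto simp: successively_conv_nth)
  ultimately show ?thesis using assms unfolding walk_def by auto
qed

lemma walk_drop:
  assumes "walk V E x y p" "i < length p"
  shows "walk V E (p ! i) y (drop i p)"
  using assms unfolding walk_def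
  by (auto simp: successively_conv_nth hd_drop_conv_nth dest: in_set_dropD)

lemma walk_V: "walk V E x y p \<Longrightarrow> x \<in> V \<and> y \<in> V"
  unfolding walk_def by (metis hd_in_set last_in_set subsetD)

lemma tri:
  assumes "connected_graph V E" "x \<in> V" "y \<in> V" "z \<in> V"
  shows "dist V E x z \<le> dist V E x y + dist V E y z"
proof -
  obtain p q where p: "geodesic V E x y p" and q: "geodesic V E y z q"
    using geo_exists assms by metis
  have "walk V E x z (p @ tl q)" using walk_concat geodesic_walk p q by metis
  from dist_le[OF this] show ?thesis using p q walk_len_concat[OF geodesic_walk[OF q], of p]
    unfolding geodesic_def by simp
qed

lemma geodesic_prefix:
  assumes "connected_graph V E" "geodesic V E r w p" "i < length p"
  shows "dist V E r (p ! i) = i \<and> geodesic V E r (p ! i) (take (Suc i) p)"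
proof -
  have wp: "walk V E r w p" using geodesic_walk[OF assms(2)] .
  have w1: "walk V E r (p ! i) (take (Suc i) p)" using walk_take[OF wp assms(3)] .
  have w2: "walk V E (p ! i) w (drop i p)" using walk_drop[OF wp assms(3)] .
  have d1: "Suc (dist V E r (p!i)) \<le> Suc i" using dist_le[OF w1] assms(3) by simp
  have d2: "Suc (dist V E (p!i) w) \<le> length p - i" using dist_le[OF w2] by simp
  have "dist V E r w \<le> dist V E r (p!i) + dist V E (p!i) w"
    using tri[OF assms(1) conjunct1[OF walk_V[OF w1]] conjunct2[OF walk_V[OF w1]] conjunct2[OF walk_V[OF w2]]] .
  moreover have "length p = Suc (dist V E r w)" using assms(2) unfolding geodesic_def by simp
  ultimately have eq: "dist V E r (p ! i) = i" using d1 d2 assms(3) by linarith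
  then show ?thesis using walk_geodesic[OF w1] assms(3) by simp
qed

lemma tree_path_geodesic:
  assumes sg: "simple_graph V E" and cg: "connected_graph V E" and gd: "geodetic V E"
    and rV: "r \<in> V"
    and pp: "path_from_to V (spt_edge V E r) r w p"
  shows "geodesic V E r w p"
proof -
  have dp: "distinct p" and ne: "p \<noteq> []" and sV: "set p \<subseteq> V"
    and sp: "successively (spt_edge V E r) p" and hp: "hd p = r" and lp: "last p = w"
    using pp unfolding path_walk walk_def by auto
  have sE: "successively E p" using sp by (rule successively_mono) (simp add: spt_edge_def)
  have wE: "walk V E r w p" using ne sV sE hp lp by (simp add: walk_def)
  have key: "\<forall>j\<le>i. dist V E r (p ! j) = j" if "i < length p" for i
    using that
  proof (induction i)
    case 0
    have "walk V E r r [r]" using rV by (simp add: walk_def)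
    from dist_le[OF this] have "dist V E r r = 0" by simp
    then show ?case using hp ne by (simp add: hd_conv_nth)
  next
    case (Suc i)
    have IH: "\<forall>j\<le>i. dist V E r (p ! j) = j" using Suc by simp
    have se: "spt_edge V E r (p ! i) (p ! Suc i)" using sp Suc.prems successively_nth by blast
    then obtain w' g m where g: "w' \<in> V" "geodesic V E r w' g" "Suc m < length g"
      "{g ! m, g ! Suc m} = {p ! i, p ! Suc i}"
      unfolding spt_edge_def by blast
    have gm: "dist V E r (g ! m) = m" using geodesic_prefix[OF cg g(2)] g(3) by simp
    have gsm: "dist V E r (g ! Suc m) = Suc m \<and> geodesic V E r (g ! Suc m) (take (Suc (Suc m)) g)"
      using geodesic_prefix[OF cg g(2) g(3)] by simp
    have "dist V E r (p ! Suc i) = Suc i"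
    proof (cases "g ! m = p ! i \<and> g ! Suc m = p ! Suc i")
      case True then show ?thesis using gm gsm IH by auto
    next
      case False
      then have c: "g ! m = p ! Suc i" "g ! Suc m = p ! i" using g(4) by (auto simp: doubleton_eq_iff)
      then have im: "i = Suc m" using gsm IH by auto
      have wt: "walk V E r (p ! i) (take (Suc i) p)" using walk_take[OF wE] Suc.prems by simp
      have gt: "geodesic V E r (p ! i) (take (Suc i) p)"
        using walk_geodesic[OF wt] IH Suc.prems by simp
      have "take (Suc i) p = take (Suc i) g"
        using gd gt gsm c im sV Suc.prems rV unfolding geodetic_def
        by (metis Suc_lessD nth_mem subsetD)
      then have "p ! m = g ! m" using im
        by (metis lessI less_SucI nth_take)
      then have "p ! m = p ! Suc i" using c by simp
      then show ?thesis using dp Suc.prems im by (simp add: nth_eq_iff_index_eq)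
    qed
    then show ?case using IH le_Suc_eq by auto
  qed
  have "last p = p ! (length p - 1)" using ne by (simp add: last_conv_nth)
  then have "dist V E r w = length p - 1" using key[of "length p - 1"] ne lp by auto
  then show ?thesis using walk_geodesic[OF wE] ne by simp
qed

lemma subtree_geo:
  assumes sg: "simple_graph V E" and cg: "connected_graph V E" and gd: "geodetic V E"
    and rV: "r \<in> V" and w: "w \<in> spt_subtree V E r u"
  shows "w \<in> V \<and> (\<exists>p. geodesic V E r w p \<and> dist V E r u < length p \<and> p ! dist V E r u = u)"
proof -
  obtain p where p: "path_from_to V (spt_edge V E r) r w p" "u \<in> set p" "w \<in> V"
    using w unfolding spt_subtree_def by blast
  have g: "geodesic V E r w p" using tree_path_geodesic[OF sg cg gd rV p(1)] .
  obtain j where j: "j < length p" "p ! j = u" using p(2) by (metis in_set_conv_nth)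
  have "dist V E r u = j" using geodesic_prefix[OF cg g j(1)] j by simp
  then show ?thesis using g j p(3) by auto
qed

lemma geo_unique: "geodetic V E \<Longrightarrow> x \<in> V \<Longrightarrow> y \<in> V \<Longrightarrow> geodesic V E x y p \<Longrightarrow> geodesic V E x y q \<Longrightarrow> p = q"
  unfolding geodetic_def by blast

theorem lemma5:
  fixes V :: "'a set" and E :: "'a \<Rightarrow> 'a \<Rightarrow> bool" and r u v u' v' :: 'a
  assumes "simple_graph V E" and "connected_graph V E" and "geodetic V E"
    and "r \<in> V" and "u \<in> V" and "v \<in> V" and "u \<noteq> v"
    and "dist V E r u = dist V E r v"
    and "E u v"
    and "u' \<in> spt_subtree V E r u" and "v' \<in> spt_subtree V E r v"
    and "{u', v'} \<noteq> {u, v}"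
  shows "\<not> E u' v'"
proof
  assume e: "E u' v'"
  note sg = assms(1) and cg = assms(2) and gd = assms(3) and rV = assms(4)
  define k where "k = dist V E r u"
  have kv: "dist V E r v = k" using assms(8) k_def by simp
  obtain p where u'V: "u' \<in> V" and p: "geodesic V E r u' p" "k < length p" "p ! k = u"
    using subtree_geo[OF sg cg gd rV assms(10)] k_def by blast
  obtain q where v'V: "v' \<in> V" and q: "geodesic V E r v' q" "k < length q" "q ! k = v"
    using subtree_geo[OF sg cg gd rV assms(11)] kv by blast
  have lp: "length p = Suc (dist V E r u')" and lq: "length q = Suc (dist V E r v')"
    using p q unfolding geodesic_def by auto
  have wp: "walk V E r u' p" and wq: "walk V E r v' q" using geodesic_walk[OF p(1)] geodesic_walk[OF q(1)] by auto
  have e': "E v' u'" using e sg unfolding simple_graph_def by simp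
  have vu: "E v u" using assms(9) sg unfolding simple_graph_def by simp
  have t1: "dist V E r v' \<le> dist V E r u' + 1"
  proof -
    have "walk V E u' v' [u', v']" using e u'V v'V by (simp add: walk_def)
    from dist_le[OF this] have "dist V E u' v' \<le> 1" by simp
    then show ?thesis using tri[OF cg rV u'V v'V] by simp
  qed
  have t2: "dist V E r u' \<le> dist V E r v' + 1"
  proof -
    have "walk V E v' u' [v', u']" using e' u'V v'V by (simp add: walk_def)
    from dist_le[OF this] have "dist V E v' u' \<le> 1" by simp
    then show ?thesis using tri[OF cg rV v'V u'V] by simp
  qed
  have case1: False if
      A: "geodesic V E r a' pa" "k < length pa" "pa ! k = a"
         "geodesic V E r b' qb" "k < length qb" "qb ! k = b" "a \<noteq> b"
         "E a' b'" "b' \<in> V" "dist V E r b' = dist V E r a' + 1" for a a' b b' pa qb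
  proof -
    have wa: "walk V E r a' pa" using geodesic_walk[OF A(1)] .
    have "walk V E a' b' [a', b']" using A(8) A(9) walk_V[OF wa] by (simp add: walk_def)
    from walk_concat[OF wa this] have w: "walk V E r b' (pa @ [b'])" by simp
    have "length (pa @ [b']) = Suc (dist V E r b')" using A(1) A(10) unfolding geodesic_def by simp
    from walk_geodesic[OF w this] have "geodesic V E r b' (pa @ [b'])" .
    then have "pa @ [b'] = qb" using geo_unique[OF gd rV A(9) _ A(4)] by blast
    then have "qb ! k = pa ! k" using A(2) by (auto simp: nth_append)
    then show False using A by simp
  qed
  show False
  proof (cases "dist V E r v' = dist V E r u' + 1")
    case True
    show False by (rule case1[OF p q assms(7) e v'V True])
  next
    case F1: False
    show False
    proof (cases "dist V E r u' = dist V E r v' + 1")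
      case True
      show False by (rule case1[OF q p _ e' u'V True]) (use assms(7) in auto)
    next
      case False
      then have eqd: "dist V E r u' = dist V E r v'" using F1 t1 t2 by linarith
      show False
      proof (cases "length p = Suc k")
        case True
        have lu: "last p = u'" "p \<noteq> []" using wp unfolding walk_def by auto
        have "u' = u" using lu True p(3) last_conv_nth[OF lu(2)] by simp
        moreover have lv: "last q = v'" "q \<noteq> []" using wq unfolding walk_def by auto
        moreover have "length q = Suc k" using True lp lq eqd by simp
        ultimately have "v' = v" using q(3) last_conv_nth[OF lv(2)] by simp
        moreover have "u' = u" using lu True p(3) last_conv_nth[OF lu(2)] by simp
        ultimately show False using assms(12) by simp
      next
        case False
        then have k2: "Suc k < length p" using p(2) by simp
        define a where "a = length p - Suc k"
        have a1: "a \<ge> 1" using k2 a_def by simp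
        have lq2: "length q = length p" using lp lq eqd by simp
        have w1: "walk V E u v' (drop k p @ [v'])"
        proof -
          have "walk V E u u' (drop k p)" using walk_drop[OF wp p(2)] p(3) by simp
          moreover have "walk V E u' v' [u', v']" using e u'V v'V by (simp add: walk_def)
          ultimately show ?thesis using walk_concat[of V E u u' "drop k p" v' "[u', v']"] by simp
        qed
        have w2: "walk V E u v' (u # drop k q)"
        proof -
          have d: "walk V E v v' (drop k q)" using walk_drop[OF wq q(2)] q(3) by simp
          have uv: "walk V E u v [u, v]" using assms(9) assms(5) assms(6) by (simp add: walk_def)
          have dq: "drop k q = v # drop (Suc k) q" using Cons_nth_drop_Suc[OF q(2)] q(3) by simp
          from walk_concat[OF uv d] show ?thesis using dq by simp
        qed
        have len1: "length (drop k p @ [v']) = Suc (Suc a)" using a_def k2 by simp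
        have len2: "length (u # drop k q) = Suc (Suc a)" using a_def k2 lq2 by simp
        have ub: "dist V E u v' \<le> Suc a" using dist_le[OF w1] len1 by simp
        have lb: "dist V E r v' \<le> k + dist V E u v'" using tri[OF cg rV assms(5) v'V] k_def by simp
        have dv': "dist V E r v' = k + a" using lq lq2 a_def k2 by simp
        have ne: "dist V E u v' \<noteq> a"
        proof
          assume da: "dist V E u v' = a"
          obtain g where g: "geodesic V E u v' g" using geo_exists[OF cg assms(5) v'V] by blast
          have wg: "walk V E u v' g" using geodesic_walk[OF g] .
          have wt: "walk V E r u (take (Suc k) p)" using walk_take[OF wp p(2)] p(3) by simp
          have wc: "walk V E r v' (take (Suc k) p @ tl g)" using walk_concat[OF wt wg] .
          have lg: "length g = Suc a" using g da unfolding geodesic_def by simp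
          have "length (take (Suc k) p @ tl g) = Suc (dist V E r v')"
            using lg dv' k2 by simp
          from walk_geodesic[OF wc this]
          have "take (Suc k) p @ tl g = q" using geo_unique[OF gd rV v'V _ q(1)] by blast
          then have "q ! k = (take (Suc k) p @ tl g) ! k" by simp
          also have "\<dots> = p ! k" using k2 by (simp add: nth_append)
          finally have "q ! k = p ! k" .
          then show False using p(3) q(3) assms(7) by simp
        qed
        have dd: "dist V E u v' = Suc a" using ub lb dv' ne by linarith
        have g1: "geodesic V E u v' (drop k p @ [v'])" using walk_geodesic[OF w1] len1 dd by simp
        have g2: "geodesic V E u v' (u # drop k q)" using walk_geodesic[OF w2] len2 dd by simp
        have "drop k p @ [v'] = u # drop k q" using geo_unique[OF gd assms(5) v'V g1 g2] .
        then have "(drop k p @ [v']) ! 1 = (u # drop k q) ! 1" by simp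
        moreover have "Suc 0 < length p - k" using k2 by linarith
        ultimately have "p ! Suc k = v" using k2 q(2) q(3) by (simp add: nth_append)
        moreover have "dist V E r (p ! Suc k) = Suc k" using geodesic_prefix[OF cg p(1) k2] by simp
        ultimately show False using kv by simp
      qed
    qed
  qed
qed

end
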